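(* Let $r,m$ be positive integers, $n=2rm$, and let $f:\mathbb{F}_{2^n}\to\mathbb{F}_{2^n}$ be an almost-$(2^r+1)$-to-1 component-wise plateaued map with $f(0)=0$ such that $0$ is the unique element of $\mathrm{Im}(f)$ with exactly one preimage. Then $f$ has exactly $\frac{2^r}{2^r+1}(2^n-1)$ bent components and exactly $\frac{2^n-1}{2^r+1}$ plateaued components with amplitude $t=2r$. Moreover, for every $b\in\mathbb{F}_{2^n}^*$, \[W_f(b,0)\in\{(-1)^m2^{rm},\,(-1)^{m+1}2^{r(m+1)}\}.\]
   Context: $\mathrm{Tr}$ denotes the absolute trace $\mathbb{F}_{2^n}\to\mathbb{F}_2$. The Walsh transform is $W_f(b,a)=\sum_{x\in\mathbb{F}_{2^n}}(-1)^{\mathrm{Tr}(bf(x)+ax)}$. The component functions of $f$ are $x\mapsto\mathrm{Tr}(\lambda f(x))$, $\lambda\in\mathbb{F}_{2^n}^*$. The component for $\lambda$ is plateaued with amplitude $t\geq 0$ if $W_f(\lambda,a)\in\{0,\pm 2^{(n+t)/2}\}$ for all $a\in\mathbb{F}_{2^n}$; $f$ is component-wise plateaued if all its components are plateaued; for $n$ even a plateaued component with $t=0$ is called bent. $f$ is almost-$k$-to-1 if there is a unique element of $\mathrm{Im}(f)$ with exactly one preimage and every other element of $\mathrm{Im}(f)$ has exactly $k$ preimages. *)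

theory Defs
  imports Complex_Main
begin

text \<open>Finite field F_{2^n} is modelled by a finite field type 'a with CARD('a) = 2^n.
  The absolute trace F_{2^n} -> F_2 is Tr(x) = sum_{i<n} x^(2^i) (value 0 or 1 in 'a).\<close>

definition abs_trace :: "nat \<Rightarrow> 'a::field \<Rightarrow> 'a" where
  "abs_trace n x = (\<Sum>i<n. x ^ (2 ^ i))"

definition chi :: "nat \<Rightarrow> 'a::field \<Rightarrow> real" where
  "chi n y = (if abs_trace n y = 0 then 1 else -1)"

definition walsh :: "nat \<Rightarrow> ('a::{field,finite} \<Rightarrow> 'a) \<Rightarrow> 'a \<Rightarrow> 'a \<Rightarrow> real" where
  "walsh n f b a = (\<Sum>x\<in>UNIV. chi n (b * f x + a * x))"

definition plateaued_component :: "nat \<Rightarrow> ('a::{field,finite} \<Rightarrow> 'a) \<Rightarrow> 'a \<Rightarrow> nat \<Rightarrow> bool" where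
  "plateaued_component n f lam t \<longleftrightarrow>
     (\<forall>a. walsh n f lam a \<in> {0, 2 powr ((real n + real t) / 2), - (2 powr ((real n + real t) / 2))})"

definition bent_component :: "nat \<Rightarrow> ('a::{field,finite} \<Rightarrow> 'a) \<Rightarrow> 'a \<Rightarrow> bool" where
  "bent_component n f lam \<longleftrightarrow> plateaued_component n f lam 0"

definition componentwise_plateaued :: "nat \<Rightarrow> ('a::{field,finite} \<Rightarrow> 'a) \<Rightarrow> bool" where
  "componentwise_plateaued n f \<longleftrightarrow> (\<forall>lam. lam \<noteq> 0 \<longrightarrow> (\<exists>t. plateaued_component n f lam t))"

definition almost_k_to_1 :: "('a \<Rightarrow> 'b) \<Rightarrow> nat \<Rightarrow> bool" where
  "almost_k_to_1 f k \<longleftrightarrow>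
     (\<exists>!y. y \<in> range f \<and> card (f -` {y}) = 1) \<and>
     (\<forall>y \<in> range f. card (f -` {y}) \<noteq> 1 \<longrightarrow> card (f -` {y}) = k)"

end

theory Submission
  imports Defs "HOL-Computational_Algebra.Polynomial" "HOL-Computational_Algebra.Primes" "HOL-Number_Theory.Cong"
begin


lemma char2:
  assumes "card (UNIV::'a set) = 2 ^ n" "n > 0"
  shows "(1::'a::{field,finite}) + 1 = 0"
proof -
  have "(\<Sum>y\<in>(UNIV::'a set). y + 1) = (\<Sum>y\<in>UNIV. y)"
  proof (rule sum.reindex_bij_betw)
    show "bij_betw (\<lambda>y. y + 1) UNIV (UNIV::'a set)"
      by (rule bij_betw_byWitness[where f'="\<lambda>y. y - 1"]) auto
  qed
  moreover have "(\<Sum>y\<in>(UNIV::'a set). y + 1) = (\<Sum>y\<in>UNIV. y) + of_nat (card (UNIV::'a set))"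
    by (simp add: sum.distrib)
  ultimately have "of_nat (card (UNIV::'a set)) = (0::'a)" by simp
  hence "(2::'a) ^ n = 0" using assms by simp
  hence "(2::'a) = 0" by simp
  thus ?thesis by simp
qed

lemma add_self_char2:
  assumes "(1::'a::field) + 1 = 0" shows "(x::'a) + x = 0"
proof -
  have "x + x = x * (1 + 1)" by (simp add: algebra_simps)
  thus ?thesis using assms by simp
qed

lemma frob:
  assumes "(1::'a::field) + 1 = 0" shows "((x::'a) + y) ^ (2 ^ i) = x ^ (2 ^ i) + y ^ (2 ^ i)"
proof (induction i)
  case 0 then show ?case by simp
next
  case (Suc i)
  have sq: "(a + b) ^ 2 = a ^ 2 + b ^ 2" for a b :: 'a
  proof -
    have "(a+b)^2 = a^2 + b^2 + (a*b + a*b)" by (simp add: power2_eq_square algebra_simps)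
    thus ?thesis using add_self_char2[OF assms] by simp
  qed
  have "(x + y) ^ (2 ^ Suc i) = ((x+y) ^ (2^i)) ^ 2" by (simp add: power_mult[symmetric] mult.commute)
  also have "\<dots> = (x ^ (2 ^ i)) ^ 2 + (y ^ (2 ^ i)) ^ 2" using Suc sq by simp
  also have "\<dots> = x ^ (2 ^ Suc i) + y ^ (2 ^ Suc i)" by (simp add: power_mult[symmetric] mult.commute)
  finally show ?case .
qed


lemma fermat_field:
  fixes x :: "'a::{field,finite}"
  shows "x ^ card (UNIV::'a set) = x"
proof (cases "x = 0")
  case True then show ?thesis by (simp add: zero_power finite_UNIV_card_ge_0)
next
  case False
  let ?S = "UNIV - {0::'a}"
  have "(\<Prod>y\<in>?S. x * y) = (\<Prod>y\<in>?S. y)"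
  proof (rule prod.reindex_bij_betw)
    show "bij_betw ((*) x) ?S ?S"
      by (rule bij_betw_byWitness[where f'="\<lambda>y. y / x"]) (use False in auto)
  qed
  moreover have "(\<Prod>y\<in>?S. x * y) = x ^ card ?S * (\<Prod>y\<in>?S. y)" by (simp add: prod.distrib)
  moreover have "(\<Prod>y\<in>?S. y) \<noteq> 0" by simp
  ultimately have "x ^ card ?S = 1" by simp
  moreover have "card ?S = card (UNIV::'a set) - 1" by (simp add: card_Diff_singleton)
  moreover have "card (UNIV::'a set) = Suc (card (UNIV::'a set) - 1)" using finite_UNIV_card_ge_0[where 'a='a] by simp
  ultimately have "x ^ card (UNIV::'a set) = x ^ card ?S * x"
    by (metis power_Suc2)
  thus ?thesis using \<open>x ^ card ?S = 1\<close> by simp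
qed


locale ff =
  fixes n :: nat and tyA :: "'a::{field,finite} itself"
  assumes card_a: "card (UNIV::'a set) = 2 ^ n" and npos: "n > 0"
begin

lemma one_one: "(1::'a) + 1 = 0" using char2[OF card_a npos] .

lemma xx: "(x::'a) + x = 0" by (rule add_self_char2[OF one_one])

lemma minus_eq: "- (x::'a) = x" using xx[of x] by (simp add: add_eq_0_iff2 eq_neg_iff_add_eq_0)

lemma tr_add: "abs_trace n ((x::'a) + y) = abs_trace n x + abs_trace n y"
  unfolding abs_trace_def by (simp add: frob[OF one_one] sum.distrib)

lemma sum_sq: "finite A \<Longrightarrow> (sum g A :: 'a) ^ 2 = (\<Sum>i\<in>A. (g i) ^ 2)"
proof (induction A rule: finite_induct)
  case empty then show ?case by simp
next
  case (insert a A)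
  then show ?case using frob[OF one_one, of "g a" "sum g A" 1] by simp
qed

lemma tr_sq: "abs_trace n (x::'a) ^ 2 = abs_trace n x"
proof -
  have "abs_trace n x ^ 2 = (\<Sum>i<n. x ^ (2 ^ Suc i))"
    unfolding abs_trace_def by (simp add: sum_sq power_mult[symmetric] mult.commute)
  moreover have "(\<Sum>i<Suc n. x ^ (2 ^ i)) = x + (\<Sum>i<n. x ^ (2 ^ Suc i))"
    by (subst sum.lessThan_Suc_shift) simp
  moreover have "(\<Sum>i<Suc n. x ^ (2 ^ i)) = abs_trace n x + x"
    using fermat_field[of x] card_a by (simp add: abs_trace_def)
  ultimately show ?thesis by (simp add: add.commute)
qed

lemma tr_01: "abs_trace n (x::'a) = 0 \<or> abs_trace n x = 1"
proof -
  have "abs_trace n x * (abs_trace n x - 1) = 0" using tr_sq[of x]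
    by (simp add: power2_eq_square algebra_simps)
  thus ?thesis by simp
qed

lemma tr_nonzero: "\<exists>a::'a. abs_trace n a \<noteq> 0"
proof (rule ccontr)
  assume "\<not> ?thesis"
  hence all0: "\<And>a::'a. abs_trace n a = 0" by blast
  define p :: "'a poly" where "p = (\<Sum>i<n. monom 1 (2 ^ i))"
  have ev: "poly p x = abs_trace n x" for x
    unfolding p_def abs_trace_def by (simp add: poly_sum poly_monom)
  have cf: "coeff p k = (\<Sum>i<n. if 2 ^ i = k then 1 else 0)" for k
    unfolding p_def by (simp add: coeff_sum coeff_monom)
  have "coeff p (2 ^ (n - 1)) = (\<Sum>i<n. if i = n - 1 then 1 else 0)"
    unfolding cf by (rule sum.cong) auto
  also have "\<dots> = 1" using npos by simp
  finally have "p \<noteq> 0" by auto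
  have "degree p \<le> 2 ^ (n - 1)"
  proof (rule degree_le, intro allI impI)
    fix k :: nat assume k: "2 ^ (n - 1) < k"
    have "\<And>i. i < n \<Longrightarrow> 2 ^ i \<noteq> k"
    proof -
      fix i assume "i < n"
      hence "(2::nat) ^ i \<le> 2 ^ (n - 1)" by (intro power_increasing) auto
      thus "2 ^ i \<noteq> k" using k by linarith
    qed
    thus "coeff p k = 0" unfolding cf by simp
  qed
  moreover have "card {x. poly p x = 0} \<le> degree p" by (rule card_poly_roots_bound[OF \<open>p \<noteq> 0\<close>])
  moreover have "{x. poly p x = 0} = UNIV" using all0 ev by auto
  note this
  moreover have "card {x. poly p x = 0} = 2 ^ n" using card_a \<open>{x. poly p x = 0} = UNIV\<close> by simp
  ultimately have "(2::nat) ^ n \<le> 2 ^ (n - 1)" by linarith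
  moreover have "(2::nat) ^ (n - 1) < 2 ^ n" using npos by simp
  ultimately show False by linarith
qed

lemma chi_add: "chi n ((x::'a) + y) = chi n x * chi n y"
  unfolding chi_def tr_add using tr_01[of x] tr_01[of y] one_one by auto

lemma chi_0: "chi n (0::'a) = 1" unfolding chi_def abs_trace_def using npos by (simp add: power_0_left)

lemma chi_pm: "chi n (x::'a) = 1 \<or> chi n x = -1" unfolding chi_def by auto

lemma chi_sq: "chi n (x::'a) * chi n x = 1" unfolding chi_def by auto

lemma char_sum: "(\<Sum>b\<in>UNIV. chi n (b * (c::'a))) = (if c = 0 then 2 ^ n else 0)"
proof (cases "c = 0")
  case True then show ?thesis using chi_0 card_a by simp
next
  case False
  have "(\<Sum>b\<in>UNIV. chi n (b * c)) = (\<Sum>b\<in>UNIV. chi n (b::'a))"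
    by (rule sum.reindex_bij_witness[where j="\<lambda>b. b*c" and i="\<lambda>y. y/c"]) (use False in auto)
  moreover obtain a0 :: 'a where a0: "abs_trace n a0 \<noteq> 0" using tr_nonzero by blast
  have "(\<Sum>b\<in>UNIV. chi n (b + a0)) = (\<Sum>b\<in>UNIV. chi n (b::'a))"
    by (rule sum.reindex_bij_betw[where h="\<lambda>b. b+a0" and g="chi n"], rule bij_betw_byWitness[where f'="\<lambda>y. y - a0"]) auto
  moreover have "chi n a0 = -1" using a0 unfolding chi_def by simp
  ultimately have "(\<Sum>b\<in>UNIV. chi n (b::'a)) = 0" by (simp add: chi_add sum_negf)
  then show ?thesis using False \<open>(\<Sum>b\<in>UNIV. chi n (b * c)) = (\<Sum>b\<in>UNIV. chi n (b::'a))\<close> by simp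
qed

end



lemma nt:
  fixes w S :: int and r s m :: nat
  assumes r: "r > 0" and wS: "w = 1 + (2^r+1)*S" and w2: "w^2 = 2^s" and sm: "2*r*m \<le> s"
  shows "\<exists>i\<ge>m. w = (-1)^i * 2^(r*i)"
proof -
  define a where "a = nat \<bar>w\<bar>"
  have ia: "int a = \<bar>w\<bar>" unfolding a_def by simp
  have "int (a^2) = int (2^s)" using w2 ia by (simp add: power2_abs)
  hence a2: "a^2 = 2^s" by (simp only: of_nat_eq_iff)
  hence "a dvd 2^s" by (metis dvd_triv_left power2_eq_square)
  then obtain j where "j \<le> s" and aj: "a = 2^j"
    using divides_primepow_nat[of 2 a s] by auto
  have "(2::nat)^(2*j) = 2^s" using a2 aj by (simp add: power_mult[symmetric] mult.commute)
  hence sj: "s = 2*j" by (simp add: power_inject_exp)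
  hence jrm: "r*m \<le> j" using sm by simp
  obtain \<sigma> :: int where sig: "\<sigma> = 1 \<or> \<sigma> = -1" and wsig: "w = \<sigma> * 2^j"
  proof (cases "w \<ge> 0")
    case True then show ?thesis using that[of 1] ia aj by simp
  next
    case False then show ?thesis using that[of "-1"] ia aj by simp
  qed
  define i where "i = j div r"
  define s0 where "s0 = j mod r"
  have jdec: "j = r*i + s0" unfolding i_def s0_def by simp
  have s0r: "s0 < r" unfolding s0_def using r by simp
  have im: "m \<le> i" unfolding i_def using jrm r
    by (metis div_le_mono nonzero_mult_div_cancel_left not_gr_zero)
  define k :: int where "k = 2^r + 1"
  have c1: "[2^r = -1] (mod k)" unfolding k_def cong_iff_dvd_diff by simp
  have c2: "[(2^r)^i = (-1)^i] (mod k)" by (rule cong_pow[OF c1])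
  have "w = \<sigma> * (2^r)^i * 2^s0" using wsig jdec by (simp add: power_add power_mult)
  hence "[w = \<sigma> * (-1)^i * 2^s0] (mod k)"
    using c2 by (metis cong_mult cong_refl mult.assoc)
  moreover have "[w = 1] (mod k)" unfolding k_def cong_iff_dvd_diff using wS by simp
  ultimately have "[\<sigma> * (-1)^i * 2^s0 = 1] (mod k)" by (metis cong_sym cong_trans)
  hence dv: "k dvd \<sigma> * (-1)^i * 2^s0 - 1" by (simp add: cong_iff_dvd_diff)
  define \<tau> where "\<tau> = \<sigma> * (-1)^i"
  have tau: "\<tau> = 1 \<or> \<tau> = -1" unfolding \<tau>_def using sig by (auto simp: minus_one_power_iff)
  have "(2::int)^s0 < 2^r" using s0r by (rule power_strict_increasing) simp
  hence "(2::int)^s0 + 1 < k" unfolding k_def by linarith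
  have p: "(0::int) < 2^s0" by simp
  have "\<tau> * 2^s0 - 1 = 0"
  proof (rule ccontr)
    assume ne: "\<tau> * 2^s0 - 1 \<noteq> 0"
    have "\<bar>k\<bar> \<le> \<bar>\<tau> * 2^s0 - 1\<bar>" using dvd_imp_le_int[OF ne] dv unfolding \<tau>_def by simp
    moreover have "\<bar>\<tau> * 2^s0 - 1\<bar> \<le> 2^s0 + 1" using tau p by (elim disjE) (auto simp: abs_if)
    ultimately show False using \<open>(2::int)^s0 + 1 < k\<close> by simp
  qed
  hence t1: "\<tau> = 1" using tau p by (elim disjE) auto
  have "s0 = 0"
  proof (rule ccontr)
    assume "s0 \<noteq> 0"
    hence "(2::int)^1 \<le> 2^s0" by (intro power_increasing) auto
    thus False using \<open>\<tau> * 2^s0 - 1 = 0\<close> t1 by simp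
  qed
  note this t1
  hence "\<tau> = 1 \<and> s0 = 0" by simp
  hence "\<sigma> = (-1)^i" unfolding \<tau>_def by (metis mult.commute mult_minus1 minus_one_mult_self mult_1 power_mult_distrib one_power2 mult_cancel_left)
  moreover have "j = r*i" using jdec \<open>\<tau> = 1 \<and> s0 = 0\<close> by simp
  ultimately show ?thesis using wsig im by auto
qed



locale mainloc = ff n "TYPE('a::{field,finite})" for n :: nat +
  fixes f :: "'a::{field,finite} \<Rightarrow> 'a" and r m :: nat
  assumes rpos: "r > 0" and mpos: "m > 0" and nrm: "n = 2 * r * m"
    and almost: "almost_k_to_1 f (2 ^ r + 1)"
    and cp: "componentwise_plateaued n f"
    and f0: "f 0 = 0"
    and c0: "card (f -` {0}) = 1"
begin

abbreviation "W b \<equiv> walsh n f b 0"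

lemma W_eq: "W b = (\<Sum>x\<in>UNIV. chi n (b * f x))"
  unfolding walsh_def by simp

lemma pre0: "f -` {0} = {0}"
proof -
  obtain z where "f -` {0} = {z}" using c0 by (metis One_nat_def card_1_singleton_iff)
  moreover have "0 \<in> f -` {0}" using f0 by simp
  ultimately show ?thesis by simp
qed

lemma fx0: "f x = 0 \<longleftrightarrow> x = 0"
  using pre0 by blast

lemma fibk: assumes "x \<noteq> 0" shows "card (f -` {f x}) = 2 ^ r + 1"
proof -
  have ex: "\<exists>!y. y \<in> range f \<and> card (f -` {y}) = 1"
    using almost unfolding almost_k_to_1_def by (rule conjunct1)
  have all: "\<forall>y \<in> range f. card (f -` {y}) \<noteq> 1 \<longrightarrow> card (f -` {y}) = 2 ^ r + 1"
    using almost unfolding almost_k_to_1_def by (rule conjunct2)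
  have z: "0 \<in> range f \<and> card (f -` {0}) = 1" using f0 c0 by (metis rangeI)
  have fxr: "f x \<in> range f" by simp
  have "f x \<noteq> 0" using fx0 assms by simp
  have "card (f -` {f x}) \<noteq> 1"
  proof
    assume "card (f -` {f x}) = 1"
    hence "f x = 0" using ex z fxr by (metis (no_types, lifting))
    thus False using \<open>f x \<noteq> 0\<close> by simp
  qed
  thus ?thesis using all fxr by blast
qed

lemma q_real: "real (card (UNIV::'a set)) = 2 ^ n" using card_a by simp

lemma W0: "W 0 = 2 ^ n"
  unfolding W_eq using chi_0 q_real by simp

lemma sumW: "(\<Sum>b\<in>UNIV. W b) = 2 ^ n"
proof -
  have "(\<Sum>b\<in>UNIV. W b) = (\<Sum>x\<in>UNIV. \<Sum>b\<in>UNIV. chi n (b * f x))"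
    unfolding W_eq by (rule sum.swap)
  also have "\<dots> = (\<Sum>x\<in>UNIV. if x = (0::'a) then 2 ^ n else 0)"
    by (rule sum.cong) (auto simp: char_sum fx0)
  also have "\<dots> = 2 ^ n" by simp
  finally show ?thesis .
qed

lemma sumW_nz: "(\<Sum>b\<in>UNIV - {0}. W b) = 0"
  using sum_diff1[of UNIV W 0] sumW W0 by simp

lemma sumW2: "(\<Sum>b\<in>UNIV. (W b)^2) = 2 ^ n * (1 + (2 ^ n - 1) * (2 ^ r + 1))"
proof -
  have sq: "(W b)^2 = (\<Sum>x\<in>UNIV. \<Sum>y\<in>UNIV. chi n (b * (f x + f y)))" for b
    unfolding W_eq power2_eq_square sum_product
    by (simp add: distrib_left chi_add)
  have "(\<Sum>b\<in>UNIV. (W b)^2) = (\<Sum>x\<in>UNIV. \<Sum>b\<in>UNIV. \<Sum>y\<in>UNIV. chi n (b * (f x + f y)))"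
    unfolding sq by (rule sum.swap)
  also have "\<dots> = (\<Sum>x\<in>UNIV. \<Sum>y\<in>UNIV. \<Sum>b\<in>UNIV. chi n (b * (f x + f y)))"
    by (rule sum.cong[OF refl], rule sum.swap)
  also have "\<dots> = (\<Sum>x\<in>UNIV. \<Sum>y\<in>UNIV. if f y = f x then 2 ^ n else 0)"
  proof (rule sum.cong[OF refl], rule sum.cong[OF refl])
    fix x y
    have "f x + f y = 0 \<longleftrightarrow> f y = f x"
      using minus_eq[of "f x"] by (metis add.commute add_eq_0_iff2 eq_neg_iff_add_eq_0)
    thus "(\<Sum>b\<in>UNIV. chi n (b * (f x + f y))) = (if f y = f x then 2 ^ n else 0)"
      by (simp add: char_sum)
  qed
  also have "\<dots> = (\<Sum>x\<in>UNIV. 2 ^ n * real (card (f -` {f x})))"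
  proof (rule sum.cong[OF refl])
    fix x
    have "(\<Sum>y\<in>UNIV. if f y = f x then (2::real) ^ n else 0) = (\<Sum>y\<in>f -` {f x}. 2 ^ n)"
      by (rule sum.mono_neutral_cong_right) auto
    thus "(\<Sum>y\<in>UNIV. if f y = f x then (2::real) ^ n else 0) = 2 ^ n * real (card (f -` {f x}))"
      by simp
  qed
  also have "\<dots> = 2 ^ n * (\<Sum>x\<in>UNIV. real (card (f -` {f x})))"
    by (simp add: sum_distrib_left)
  also have "(\<Sum>x\<in>UNIV. real (card (f -` {f x}))) = 1 + (2 ^ n - 1) * (2 ^ r + 1)"
  proof -
    have "(\<Sum>x\<in>UNIV. real (card (f -` {f x}))) = real (card (f -` {f 0})) + (\<Sum>x\<in>UNIV - {0}. real (card (f -` {f x})))"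
      by (rule sum.remove) auto
    also have "(\<Sum>x\<in>UNIV - {0}. real (card (f -` {f x}))) = (\<Sum>x\<in>UNIV - {0::'a}. 2 ^ r + 1)"
      by (rule sum.cong) (auto simp: fibk)
    also have "\<dots> = (2 ^ n - 1) * (2 ^ r + 1)"
      using card_a by (simp add: card_Diff_singleton of_nat_diff)
    finally show ?thesis using f0 c0 by simp
  qed
  finally show ?thesis .
qed

lemma sumW2_nz: "(\<Sum>b\<in>UNIV - {0}. (W b)^2) = 2 ^ n * (2 ^ n - 1) * 2 ^ r"
proof -
  have "(\<Sum>b\<in>UNIV - {0}. (W b)^2) = (\<Sum>b\<in>UNIV. (W b)^2) - (W 0)^2"
    by (simp add: sum_diff1)
  thus ?thesis unfolding sumW2 W0 by (simp add: algebra_simps power2_eq_square)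
qed


lemma W_int: "\<exists>S::int. W b = 1 + (2^r+1) * of_int S"
proof -
  have "W b = chi n (b * f 0) + (\<Sum>x\<in>UNIV - {0}. chi n (b * f x))"
    unfolding W_eq by (rule sum.remove) simp_all
  hence e1: "W b = 1 + (\<Sum>x\<in>UNIV - {0}. chi n (b * f x))" using f0 chi_0 by simp
  have "(\<Sum>x\<in>UNIV - {0}. chi n (b * f x)) = (\<Sum>y\<in>f ` (UNIV - {0}). \<Sum>x\<in>{x. x \<in> UNIV - {0} \<and> f x = y}. chi n (b * f x))"
    by (rule sum.image_gen) simp
  also have "\<dots> = (\<Sum>y\<in>f ` (UNIV - {0}). (2^r+1) * chi n (b * y))"
  proof (rule sum.cong[OF refl])
    fix y assume "y \<in> f ` (UNIV - {0})"
    then obtain x0 where x0: "x0 \<noteq> 0" "y = f x0" by auto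
    have "{x. x \<in> UNIV - {0} \<and> f x = y} = f -` {f x0}"
    proof (intro set_eqI iffI)
      fix x assume "x \<in> {x. x \<in> UNIV - {0} \<and> f x = y}" thus "x \<in> f -` {f x0}" using x0 by simp
    next
      fix x assume "x \<in> f -` {f x0}"
      hence "f x = f x0" by simp
      moreover have "f x0 \<noteq> 0" using x0(1) fx0 by simp
      ultimately have "x \<noteq> 0" using f0 by auto
      thus "x \<in> {x. x \<in> UNIV - {0} \<and> f x = y}" using \<open>f x = f x0\<close> x0 by simp
    qed
    hence "(\<Sum>x\<in>{x. x \<in> UNIV - {0} \<and> f x = y}. chi n (b * f x)) = (\<Sum>x\<in>f -` {f x0}. chi n (b * y))"
      using x0 by simp
    also have "\<dots> = (2^r+1) * chi n (b * y)" using fibk[OF x0(1)] by simp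
    finally show "(\<Sum>x\<in>{x. x \<in> UNIV - {0} \<and> f x = y}. chi n (b * f x)) = (2^r+1) * chi n (b * y)" .
  qed
  also have "\<dots> = (2^r+1) * (\<Sum>y\<in>f ` (UNIV - {0}). chi n (b * y))"
    by (simp add: sum_distrib_left)
  finally have e2: "W b = 1 + (2^r+1) * (\<Sum>y\<in>f ` (UNIV - {0}). chi n (b * y))" using e1 by simp
  have "(\<Sum>y\<in>f ` (UNIV - {0}). chi n (b * y)) \<in> \<int>"
  proof (rule Ints_sum)
    fix y show "chi n (b * y) \<in> \<int>" using chi_pm[of "b*y"] by (metis Ints_1 Ints_minus)
  qed
  then obtain S where "(\<Sum>y\<in>f ` (UNIV - {0}). chi n (b * y)) = of_int S" by (rule Ints_cases)
  thus ?thesis using e2 by (intro exI[of _ S]) simp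
qed

lemma W_nz: "W b \<noteq> 0"
proof
  assume W0: "W b = 0"
  obtain S where S: "W b = 1 + (2^r+1) * of_int S" using W_int by blast
  have "real_of_int (1 + (2^r+1) * S) = 0" using S W0 by simp
  hence e: "1 + (2^r+1) * S = 0" by (simp only: of_int_eq_0_iff)
  have "(2^r+1::int) dvd 1" unfolding dvd_def by (rule exI[of _ "-S"]) (use e in simp)
  hence "\<bar>2^r+1::int\<bar> = 1" by simp
  moreover have "(0::int) < 2^r" by simp
  ultimately show False by simp
qed

lemma plat_abs: assumes "plateaued_component n f b t"
  shows "\<bar>W b\<bar> = 2 powr ((real n + real t) / 2)"
proof -
  have "W b \<in> {0, 2 powr ((real n + real t) / 2), - (2 powr ((real n + real t) / 2))}"
    using assms unfolding plateaued_component_def by blast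
  thus ?thesis using W_nz[of b] by auto
qed

lemma plat_iff: assumes "b \<noteq> 0"
  shows "plateaued_component n f b t \<longleftrightarrow> \<bar>W b\<bar> = 2 powr ((real n + real t) / 2)"
proof
  assume "plateaued_component n f b t" thus "\<bar>W b\<bar> = 2 powr ((real n + real t) / 2)" by (rule plat_abs)
next
  assume a: "\<bar>W b\<bar> = 2 powr ((real n + real t) / 2)"
  obtain t0 where t0: "plateaued_component n f b t0" using cp assms unfolding componentwise_plateaued_def by blast
  have "(2::real) powr ((real n + real t0) / 2) = 2 powr ((real n + real t) / 2)" using plat_abs[OF t0] a by simp
  hence "(real n + real t0) / 2 = (real n + real t) / 2" by (simp add: powr_inj)
  hence "t0 = t" by simp
  thus "plateaued_component n f b t" using t0 by simp
qed

lemma W_form: assumes "b \<noteq> 0" shows "\<exists>i\<ge>m. W b = (-1)^i * (2^r)^i"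
proof -
  obtain t0 where t0: "plateaued_component n f b t0" using cp assms unfolding componentwise_plateaued_def by blast
  define x where "x = (real n + real t0) / 2"
  have a: "\<bar>W b\<bar> = 2 powr x" using plat_abs[OF t0] unfolding x_def .
  have "(W b)^2 = \<bar>W b\<bar> * \<bar>W b\<bar>" by (simp add: power2_eq_square)
  also have "\<dots> = 2 powr (x + x)" using a by (simp add: powr_add[symmetric])
  also have "x + x = real (n + t0)" unfolding x_def by simp
  also have "(2::real) powr real (n + t0) = 2 ^ (n + t0)" by (rule powr_realpow) simp
  finally have W2: "(W b)^2 = 2 ^ (n + t0)" .
  obtain S where S: "W b = 1 + (2^r+1) * of_int S" using W_int by blast
  define w :: int where "w = 1 + (2^r+1) * S"
  have ww: "real_of_int w = W b" unfolding w_def S by simp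
  have "real_of_int (w^2) = real_of_int (2 ^ (n + t0))" using W2 ww by simp
  hence "w^2 = 2 ^ (n + t0)" by (simp only: of_int_eq_iff)
  moreover have "2 * r * m \<le> n + t0" using nrm by simp
  ultimately obtain i where "i \<ge> m" "w = (-1)^i * 2^(r*i)" using nt[OF rpos w_def] by blast
  hence "W b = (-1)^i * (2^r)^i" using ww by (simp add: power_mult)
  thus ?thesis using \<open>i \<ge> m\<close> by blast
qed

end


lemma ypos:
  fixes u :: real assumes u: "u \<ge> 2"
  shows "0 \<le> ((-1)^d * u^d - 1) * ((-1)^d * u^d + u) \<and>
         (((-1)^d * u^d - 1) * ((-1)^d * u^d + u) = 0 \<longrightarrow> d = 0 \<or> d = 1)"
proof (cases "d \<le> 1")
  case True
  then consider "d = 0" | "d = 1" by linarith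
  then show ?thesis by cases simp_all
next
  case False
  have "u^2 \<le> u^d" using False u by (intro power_increasing) auto
  moreover have "u^2 = u * u" by (simp add: power2_eq_square)
  moreover have "2 * u \<le> u * u" using u by (intro mult_right_mono) auto
  ultimately have big: "u^d > u" "u^d > 1" using u by linarith+
  have "0 < ((-1)^d * u^d - 1) * ((-1)^d * u^d + u)"
  proof (cases "even d")
    case True
    then show ?thesis using big u by (simp add: mult_pos_pos)
  next
    case False
    then have e: "(-1::real)^d = -1" by simp
    have "-(u^d) - 1 < 0" "-(u^d) + u < 0" using big by linarith+
    then show ?thesis unfolding e by (simp add: mult_neg_neg)
  qed
  then show ?thesis using False by (metis less_irrefl order_less_imp_le)
qed

context mainloc
begin

lemma Wvals: assumes "b \<noteq> 0"
  shows "W b = (-1)^m * (2^r)^m \<or> W b = (-1)^(m+1) * (2^r)^(m+1)"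
proof -
  define U :: real where "U = 2^r"
  have U2: "U \<ge> 2" unfolding U_def using rpos power_increasing[of 1 r "2::real"] by simp
  have Upos: "U > 0" using U2 by simp
  define Y where "Y b = (-1)^m * W b / U^m" for b
  have Yf: "\<exists>d. Y b = (-1)^d * U^d" if bnz: "b \<noteq> 0" for b
  proof -
    obtain i where i: "i \<ge> m" "W b = (-1)^i * (2^r)^i" using W_form[OF bnz] by blast
    define d where "d = i - m"
    have idm: "i = m + d" unfolding d_def using i(1) by simp
    have mm: "(-1::real)^m * (-1)^m = 1" by simp
    have "Y b = ((-1)^m * (-1)^m) * (-1)^d * (U^m * U^d) / U^m"
      unfolding Y_def i(2) idm U_def[symmetric] power_add by (simp add: ac_simps)
    also have "\<dots> = (-1)^d * U^d" unfolding mm using Upos by simp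
    finally show ?thesis by blast
  qed
  have fin: "finite (UNIV - {0::'a})" by simp
  have nonneg: "0 \<le> (Y b - 1) * (Y b + U)" if bin: "b \<in> UNIV - {0}" for b
  proof -
    obtain d where "Y b = (-1)^d * U^d" using Yf bin by blast
    thus ?thesis using conjunct1[OF ypos[OF U2, of d]] by simp
  qed
  have sumY: "(\<Sum>b\<in>UNIV - {0}. Y b) = 0"
    unfolding Y_def by (simp add: sum_divide_distrib[symmetric] sum_distrib_left[symmetric] sumW_nz)
  have Um2: "(U^m)^2 = 2^n" unfolding U_def nrm by (simp add: power_mult[symmetric] ac_simps)
  have mm2: "((-1::real)^m)^2 = 1" by (simp add: power2_eq_square)
  have Y2: "(Y b)^2 = (W b)^2 / 2^n" for b
    using mm2 unfolding Y_def Um2[symmetric] by (simp add: power_mult_distrib power_divide)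
  have sumY2: "(\<Sum>b\<in>UNIV - {0}. (Y b)^2) = (2^n - 1) * U"
    unfolding Y2 by (simp add: sum_divide_distrib[symmetric] sumW2_nz U_def)
  have cardnz: "real (card (UNIV - {0::'a})) = 2^n - 1"
    using card_a by (simp add: card_Diff_singleton of_nat_diff)
  have "(\<Sum>b\<in>UNIV - {0}. (Y b - 1) * (Y b + U)) = (\<Sum>b\<in>UNIV - {0}. ((Y b)^2 + (U - 1) * Y b) - U)"
    by (rule sum.cong) (simp_all add: algebra_simps power2_eq_square)
  also have "\<dots> = (\<Sum>b\<in>UNIV - {0}. (Y b)^2) + (U - 1) * (\<Sum>b\<in>UNIV - {0}. Y b) - (\<Sum>b\<in>UNIV - {0::'a}. U)"
    by (simp only: sum_subtractf sum.distrib sum_distrib_left)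
  also have "(\<Sum>b\<in>UNIV - {0::'a}. U) = (2^n - 1) * U" using cardnz by simp
  also have "(\<Sum>b\<in>UNIV - {0}. (Y b)^2) + (U - 1) * (\<Sum>b\<in>UNIV - {0}. Y b) - (2^n - 1) * U = 0"
    unfolding sumY sumY2 by simp
  finally have "(\<Sum>b\<in>UNIV - {0}. (Y b - 1) * (Y b + U)) = 0" .
  moreover have "(\<Sum>b\<in>UNIV - {0}. (Y b - 1) * (Y b + U)) = 0 \<longleftrightarrow> (\<forall>b\<in>UNIV - {0}. (Y b - 1) * (Y b + U) = 0)"
    by (rule sum_nonneg_eq_0_iff[OF fin nonneg])
  ultimately have "\<forall>b\<in>UNIV - {0}. (Y b - 1) * (Y b + U) = 0" by simp
  hence z: "(Y b - 1) * (Y b + U) = 0" using assms by simp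
  obtain d where d: "Y b = (-1)^d * U^d" using Yf[OF assms] by blast
  have "d = 0 \<or> d = 1" using conjunct2[OF ypos[OF U2, of d]] z d by metis
  hence Yv: "Y b = 1 \<or> Y b = - U" using d by (elim disjE) simp_all
  have Wb: "W b = (-1)^m * U^m * Y b" unfolding Y_def using Upos by simp
  from Yv show ?thesis
  proof (elim disjE)
    assume "Y b = 1" thus ?thesis using Wb unfolding U_def by simp
  next
    assume "Y b = - U"
    hence "W b = (-1)^(m+1) * U^(m+1)" using Wb by (simp add: power_Suc2)
    thus ?thesis unfolding U_def by simp
  qed
qed


lemma final:
  shows "real (card {lam. lam \<noteq> 0 \<and> bent_component n f lam}) = (2 ^ r / (2 ^ r + 1)) * (2 ^ n - 1)
       \<and> real (card {lam. lam \<noteq> 0 \<and> plateaued_component n f lam (2 * r)}) = (2 ^ n - 1) / (2 ^ r + 1)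
       \<and> (\<forall>b. b \<noteq> 0 \<longrightarrow> W b \<in> {(-1) ^ m * 2 ^ (r * m), (-1) ^ (m + 1) * 2 ^ (r * (m + 1))})"
proof -
  define U :: real where "U = 2^r"
  have U2: "U \<ge> 2" unfolding U_def using rpos power_increasing[of 1 r "2::real"] by simp
  have Upos: "U > 0" using U2 by simp
  have Ult: "U^m < U^(m+1)" using U2 by (simp add: power_strict_increasing)
  have Wv: "W b = (-1)^m * U^m \<or> W b = (-1)^(m+1) * U^(m+1)" if "b \<noteq> 0" for b
    using Wvals[OF that] unfolding U_def .
  define B where "B = {b. b \<noteq> 0 \<and> W b = (-1)^m * U^m}"
  define C where "C = {b. b \<noteq> 0 \<and> W b = (-1)^(m+1) * U^(m+1)}"
  have aB: "\<bar>(-1)^m * U^m\<bar> = U^m" using Upos by (simp add: abs_mult power_abs)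
  have aC: "\<bar>(-1)^(m+1) * U^(m+1)\<bar> = U^(m+1)" using Upos by (simp add: abs_mult power_abs)
  have absiff1: "\<bar>W b\<bar> = U^m \<longleftrightarrow> b \<in> B" if "b \<noteq> 0" for b
    using Wv[OF that] aB aC Ult that unfolding B_def by auto
  have absiff2: "\<bar>W b\<bar> = U^(m+1) \<longleftrightarrow> b \<in> C" if "b \<noteq> 0" for b
    using Wv[OF that] aB aC Ult that unfolding C_def by auto
  have disj: "B \<inter> C = {}"
  proof (rule ccontr)
    assume "B \<inter> C \<noteq> {}"
    then obtain b where "b \<in> B" "b \<in> C" by blast
    hence "\<bar>W b\<bar> = U^m" "\<bar>W b\<bar> = U^(m+1)" using aB aC unfolding B_def C_def by auto
    thus False using Ult by linarith
  qed
  have un: "UNIV - {0} = B \<union> C" using Wv unfolding B_def C_def by auto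
  have finB: "finite B" and finC: "finite C" by simp_all
  have "(\<Sum>b\<in>UNIV - {0}. W b) = (\<Sum>b\<in>B. W b) + (\<Sum>b\<in>C. W b)"
    unfolding un by (rule sum.union_disjoint[OF finB finC disj])
  also have "(\<Sum>b\<in>B. W b) = (\<Sum>b\<in>B. (-1)^m * U^m)" by (rule sum.cong) (simp_all add: B_def)
  also have "(\<Sum>b\<in>C. W b) = (\<Sum>b\<in>C. (-1)^(m+1) * U^(m+1))" by (rule sum.cong) (simp_all add: C_def)
  finally have "0 = real (card B) * ((-1)^m * U^m) + real (card C) * ((-1)^(m+1) * U^(m+1))"
    using sumW_nz by simp
  also have "\<dots> = ((-1)^m * U^m) * (real (card B) - U * real (card C))"
    by (simp add: algebra_simps)
  finally have cBC: "real (card B) = U * real (card C)" using Upos by simp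
  have "card (UNIV - {0::'a}) = card B + card C" unfolding un by (rule card_Un_disjoint[OF finB finC disj])
  moreover have "real (card (UNIV - {0::'a})) = 2^n - 1"
    using card_a by (simp add: card_Diff_singleton of_nat_diff)
  ultimately have sBC: "real (card B) + real (card C) = 2^n - 1" by simp
  have cC: "real (card C) = (2^n - 1) / (U + 1)" using cBC sBC Upos by (simp add: field_simps)
  have cB: "real (card B) = (U / (U + 1)) * (2^n - 1)" using cBC cC by simp
  have p1: "(2::real) powr ((real n + real (0::nat)) / 2) = U^m"
  proof -
    have e: "(real n + real (0::nat)) / 2 = real (r*m)" using nrm by simp
    have "(2::real) powr ((real n + real (0::nat)) / 2) = 2 ^ (r*m)" unfolding e by (rule powr_realpow) simp
    thus ?thesis unfolding U_def by (simp add: power_mult)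
  qed
  have p2: "(2::real) powr ((real n + real (2*r)) / 2) = U^(m+1)"
  proof -
    have e: "(real n + real (2*r)) / 2 = real (r*(m+1))" using nrm by (simp add: algebra_simps)
    have "(2::real) powr ((real n + real (2*r)) / 2) = 2 ^ (r*(m+1))" unfolding e by (rule powr_realpow) simp
    thus ?thesis unfolding U_def by (simp add: power_mult[symmetric] power_add[symmetric] algebra_simps)
  qed
  have sB: "{lam. lam \<noteq> 0 \<and> bent_component n f lam} = B"
  proof (intro set_eqI iffI)
    fix b assume "b \<in> {lam. lam \<noteq> 0 \<and> bent_component n f lam}"
    hence b: "b \<noteq> 0" "plateaued_component n f b 0" unfolding bent_component_def by auto
    thus "b \<in> B" using plat_iff[OF b(1), of 0] p1 absiff1[OF b(1)] by simp
  next
    fix b assume bB: "b \<in> B"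
    hence b: "b \<noteq> 0" unfolding B_def by simp
    hence "plateaued_component n f b 0" using plat_iff[OF b, of 0] p1 absiff1[OF b] bB by simp
    thus "b \<in> {lam. lam \<noteq> 0 \<and> bent_component n f lam}" using b unfolding bent_component_def by simp
  qed
  have sC: "{lam. lam \<noteq> 0 \<and> plateaued_component n f lam (2 * r)} = C"
  proof (intro set_eqI iffI)
    fix b assume "b \<in> {lam. lam \<noteq> 0 \<and> plateaued_component n f lam (2 * r)}"
    hence b: "b \<noteq> 0" "plateaued_component n f b (2*r)" by auto
    thus "b \<in> C" using plat_iff[OF b(1), of "2*r"] p2 absiff2[OF b(1)] by simp
  next
    fix b assume bC: "b \<in> C"
    hence b: "b \<noteq> 0" unfolding C_def by simp
    hence "plateaued_component n f b (2*r)" using plat_iff[OF b, of "2*r"] p2 absiff2[OF b] bC by simp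
    thus "b \<in> {lam. lam \<noteq> 0 \<and> plateaued_component n f lam (2 * r)}" using b by simp
  qed
  have third: "\<forall>b. b \<noteq> 0 \<longrightarrow> W b \<in> {(-1) ^ m * 2 ^ (r * m), (-1) ^ (m + 1) * 2 ^ (r * (m + 1))}"
  proof (intro allI impI)
    fix b :: 'a assume "b \<noteq> 0"
    thus "W b \<in> {(-1) ^ m * 2 ^ (r * m), (-1) ^ (m + 1) * 2 ^ (r * (m + 1))}"
      using Wvals[OF \<open>b \<noteq> 0\<close>] unfolding power_mult by blast
  qed
  show ?thesis unfolding sB sC using cB cC third unfolding U_def by simp
qed

end

theorem theorem6p5:
  fixes f :: "'a::{field,finite} \<Rightarrow> 'a" and r m n :: nat
  assumes "r > 0" and "m > 0" and "n = 2 * r * m"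
    and "card (UNIV :: 'a set) = 2 ^ n"
    and "almost_k_to_1 f (2 ^ r + 1)"
    and "componentwise_plateaued n f"
    and "f 0 = 0"
    and "card (f -` {0}) = 1"
  shows "real (card {lam. lam \<noteq> 0 \<and> bent_component n f lam})
           = (2 ^ r / (2 ^ r + 1)) * (2 ^ n - 1)
       \<and> real (card {lam. lam \<noteq> 0 \<and> plateaued_component n f lam (2 * r)})
           = (2 ^ n - 1) / (2 ^ r + 1)
       \<and> (\<forall>b. b \<noteq> 0 \<longrightarrow>
           walsh n f b 0 \<in> {(-1) ^ m * 2 ^ (r * m), (-1) ^ (m + 1) * 2 ^ (r * (m + 1))})"
proof -
  have npos: "n > 0" using assms(1,2,3) by simp
  interpret mainloc n f r m
    by unfold_locales (use assms npos in simp_all)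
  show ?thesis by (rule final)
qed

end
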